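(* For every prime $p\ge3$, the polynomials $P_{1,p}(z)=\sum_{n=0}^{p-1}\left(\binom{2n}{n}^2\bmod p\right)z^n$ and $P_{2,p}(z)=\sum_{n=0}^{p-1}\left(\frac{-1}{2n-1}\binom{2n}{n}^2\bmod p\right)z^n$ in $\mathbb{F}_p[z]$ are coprime.
   Context: The coefficients $\frac{-1}{2n-1}\binom{2n}{n}^2$ are integers, so their reduction mod $p$ makes sense. *)

theory Defs
  imports "Berlekamp_Zassenhaus.Finite_Field" "HOL-Computational_Algebra.Polynomial"
begin

text \<open>Integer coefficients. a1 n = binom(2n,n)^2; a2 n = -binom(2n,n)^2/(2n-1),
  which is an exact integer division (for n = 0 it equals 1).\<close>
definition a1 :: "nat \<Rightarrow> int" where
  "a1 n = (int ((2*n) choose n))^2"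

definition a2 :: "nat \<Rightarrow> int" where
  "a2 n = - ((int ((2*n) choose n))^2 div (2 * int n - 1))"

definition P1 :: "'p::prime_card mod_ring poly" where
  "P1 = (\<Sum>n<CARD('p). monom (of_int (a1 n)) n)"

definition P2 :: "'p::prime_card mod_ring poly" where
  "P2 = (\<Sum>n<CARD('p). monom (of_int (a2 n)) n)"

end

theory Submission imports Defs begin

lemma cen_rec: "Suc n * (2*Suc n choose Suc n) = 2*(2*n+1)*(2*n choose n)"
  by (metis Suc_eq_plus1 Suc_times_binomial Suc_times_binomial_eq add_Suc
    add_mult_distrib binomial_Suc_n choose_mult_lemma left_add_twice mult_2)

lemma cen_rec_int: "n > 0 \<Longrightarrow> int n * int (2*n choose n) = 2*(2*int n - 1) * int (2*(n-1) choose (n-1))"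
proof -
  assume "n > 0" then obtain k where k: "n = Suc k" by (cases n) auto
  have "int (Suc k * (2*Suc k choose Suc k)) = int (2*(2*k+1)*(2*k choose k))"
    using cen_rec by presburger
  thus ?thesis unfolding k by (simp add: algebra_simps)
qed

lemma a2_rel: "(2*int n - 1) * a2 n = - a1 n"
proof (cases "n = 0")
  case True thus ?thesis by (simp add: a1_def a2_def)
next
  case False
  define d where "d = 2*int n - 1"
  define C where "C = int (2*n choose n)"
  have e: "int n * C = d * (2 * int (2*(n-1) choose (n-1)))"
    using cen_rec_int[of n] False unfolding C_def d_def by (simp add: algebra_simps)
  have cop: "coprime d (int n)"
  proof (rule coprimeI)
    fix x assume "x dvd d" "x dvd int n"
    hence "x dvd 2 * int n - d" by (simp add: dvd_diff)
    thus "is_unit x" unfolding d_def by simp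
  qed
  have "d dvd int n * C" using e by simp
  hence "d dvd C" using cop by (simp add: coprime_dvd_mult_right_iff)
  hence "d dvd C^2" by (simp add: power2_eq_square)
  hence "d * (C^2 div d) = C^2" by simp
  thus ?thesis unfolding a1_def a2_def C_def[symmetric] d_def[symmetric] by simp
qed

lemma a12: assumes "n > 0"
  shows "(2*int n + 1) * a1 n - 16*(2*int n - 1) * a1 (n-1) = a2 n"
proof -
  define d where "d = 2*int n - 1"
  define C where "C = int (2*n choose n)"
  define c where "c = int (2*(n-1) choose (n-1))"
  have e: "int n * C = 2 * d * c"
    using cen_rec_int[of n] assms unfolding C_def d_def c_def by (simp add: algebra_simps)
  have r: "d * a2 n = -(C^2)" using a2_rel[of n] unfolding d_def C_def a1_def by simp
  have dn: "d \<noteq> 0" unfolding d_def by presburger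
  have nn: "int n \<noteq> 0" using assms by simp
  have e2: "(int n)^2 * C^2 = 4 * d^2 * c^2"
    using arg_cong[OF e, of "\<lambda>x. x^2"] by (simp add: power_mult_distrib)
  have "d * (int n)^2 * ((2*int n + 1) * C^2 - 16*d * c^2) = d * (int n)^2 * a2 n"
  proof -
    have "d * (int n)^2 * a2 n = -((int n)^2 * C^2)" using r by (metis mult.assoc mult.commute mult_minus_left)
    also have "\<dots> = -(4 * d^2 * c^2)" using e2 by simp
    also have "\<dots> = d * (2*int n + 1) * ((int n)^2 * C^2) - 16 * d^2 * (int n)^2 * c^2"
      unfolding e2 unfolding d_def by (simp add: algebra_simps power2_eq_square)
    finally show ?thesis by (simp add: algebra_simps power2_eq_square)
  qed
  hence "(2*int n + 1) * C^2 - 16*d * c^2 = a2 n" using dn nn by simp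
  thus ?thesis unfolding a1_def C_def c_def d_def using assms by simp
qed


lemma of_nat_nz: "0 < x \<Longrightarrow> x < CARD('p::prime_card) \<Longrightarrow> (of_nat x :: 'p mod_ring) \<noteq> 0"
  using of_nat_0_mod_ring_dvd[where 'a='p, of x] by (auto dest: nat_dvd_not_less)

lemma binom_Suc_rel: "Suc k * (m choose Suc k) = (m - k) * (m choose k)"
  by (metis binomial_absorption binomial_absorb_comp)

lemma coeff_P1: "coeff (P1 :: 'p::prime_card mod_ring poly) n = (if n < CARD('p) then of_int (a1 n) else 0)"
  unfolding P1_def by (simp add: coeff_sum coeff_monom)

lemma coeff_P2: "coeff (P2 :: 'p::prime_card mod_ring poly) n = (if n < CARD('p) then of_int (a2 n) else 0)"
  unfolding P2_def by (simp add: coeff_sum coeff_monom)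

lemma coeff_zderiv: "coeff ([:0,1:] * pderiv f) n = of_nat n * coeff f n"
  by (cases n) (simp_all add: coeff_pderiv)

lemma coeff_ell: "coeff ([:1,-16:] * (q::'a::comm_ring_1 poly)) n = coeff q n - 16 * (if n = 0 then 0 else coeff q (n-1))"
  by (cases n) simp_all

lemma cong_c:
  assumes m: "2*m+1 = CARD('p::prime_card)" and n: "n < CARD('p)"
  shows "(of_nat (2*n choose n) :: 'p mod_ring) = (-4)^n * of_nat (m choose n)"
  using n
proof (induction n)
  case 0 thus ?case by simp
next
  case (Suc k)
  have IH: "(of_nat (2*k choose k) :: 'p mod_ring) = (-4)^k * of_nat (m choose k)"
    using Suc by simp
  have nz: "(of_nat (Suc k) :: 'p mod_ring) \<noteq> 0" using of_nat_nz Suc.prems by blast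
  have e1: "(of_nat (Suc k) :: 'p mod_ring) * of_nat (2*Suc k choose Suc k) = 2*(2*of_nat k+1)*of_nat (2*k choose k)"
  proof -
    have "(of_nat (Suc k * (2*Suc k choose Suc k)) :: 'p mod_ring) = of_nat (2*(2*k+1)*(2*k choose k))"
      using cen_rec[of k] by metis
    thus ?thesis by (simp only: of_nat_mult of_nat_add of_nat_numeral of_nat_1)
  qed
  have e2: "(of_nat (Suc k) :: 'p mod_ring) * of_nat (m choose Suc k) = of_nat (m - k) * of_nat (m choose k)"
  proof -
    have "(of_nat (Suc k * (m choose Suc k)) :: 'p mod_ring) = of_nat ((m - k) * (m choose k))"
      using binom_Suc_rel[of k m] by metis
    thus ?thesis by (simp only: of_nat_mult)
  qed
  have key: "(-4) * (of_nat (m - k) * of_nat (m choose k)) = 2*(2*of_nat k+1)*(of_nat (m choose k) :: 'p mod_ring)"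
  proof (cases "k \<le> m")
    case True
    have "(of_nat (CARD('p)) :: 'p mod_ring) = 0" by simp
    hence "2 * (of_nat m :: 'p mod_ring) + 1 = 0" unfolding m[symmetric] by (simp add: add.commute)
    have r: "(-4) * (of_nat m - of_nat k) = 2*(2*of_nat k+1) - 2*(2 * (of_nat m :: 'p mod_ring) + 1)"
      by (simp add: algebra_simps)
    have "(of_nat (m - k) :: 'p mod_ring) = of_nat m - of_nat k" using True by (simp add: of_nat_diff)
    thus ?thesis using r \<open>2 * (of_nat m :: 'p mod_ring) + 1 = 0\<close> by (simp add: mult.assoc[symmetric])
  next
    case False thus ?thesis by (simp add: binomial_eq_0)
  qed
  have "(of_nat (Suc k) :: 'p mod_ring) * ((-4)^Suc k * of_nat (m choose Suc k))
      = (-4)^k * ((-4) * ((of_nat (Suc k) :: 'p mod_ring) * of_nat (m choose Suc k)))"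
    by (simp add: algebra_simps)
  also have "\<dots> = (-4)^k * (2*(2*of_nat k+1)*(of_nat (m choose k) :: 'p mod_ring))"
    unfolding e2 key ..
  also have "\<dots> = 2*(2*of_nat k+1) * ((-4)^k * of_nat (m choose k))" by (simp add: algebra_simps)
  also have "\<dots> = (of_nat (Suc k) :: 'p mod_ring) * of_nat (2*Suc k choose Suc k)"
    unfolding e1 IH ..
  finally have "(of_nat (Suc k) :: 'p mod_ring) * of_nat (2*Suc k choose Suc k)
      = of_nat (Suc k) * ((-4)^Suc k * of_nat (m choose Suc k))" ..
  thus ?case using nz mult_left_cancel by blast
qed


lemma of_int_a1: "(of_int (a1 n) :: 'a::comm_ring_1) = (of_nat (2*n choose n))^2"
  unfolding a1_def by simp

lemma idA: "smult 2 ([:0,1:] * pderiv (P2 :: 'p::prime_card mod_ring poly)) = P2 - P1"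
proof (rule poly_eqI)
  fix n
  have r: "(2*of_nat n - 1) * (of_int (a2 n) :: 'p mod_ring) = - of_int (a1 n)"
    using arg_cong[OF a2_rel[of n], of "of_int :: int \<Rightarrow> 'p mod_ring"] by simp
  show "coeff (smult 2 ([:0,1:] * pderiv P2)) n = coeff (P2 - P1 :: 'p mod_ring poly) n"
    unfolding coeff_smult coeff_zderiv coeff_diff coeff_P1 coeff_P2
    using r by (auto simp: algebra_simps)
qed

lemma coeff_Q: "coeff (P1 + smult 2 ([:0,1:] * pderiv P1)) n = (1 + 2*of_nat n) * coeff (P1 :: 'p::prime_card mod_ring poly) n"
  unfolding coeff_add coeff_smult coeff_zderiv by (simp add: algebra_simps)

lemma idB: assumes p3: "CARD('p::prime_card) \<ge> 3"
  shows "[:1,-16:] * (P1 + smult 2 ([:0,1:] * pderiv P1)) = (P2 :: 'p mod_ring poly)"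
proof (rule poly_eqI)
  fix n
  define p where "p = CARD('p)"
  define m where "m = (p - 1) div 2"
  have "prime p" unfolding p_def by (rule prime_card)
  hence "odd p" using p3 prime_odd_nat unfolding p_def by auto
  hence m: "2*m+1 = CARD('p)" unfolding m_def p_def[symmetric] by presburger
  have zero: "(of_int (a1 (p-1)) :: 'p mod_ring) = 0"
  proof -
    have "(of_nat (2*(p-1) choose (p-1)) :: 'p mod_ring) = (-4)^(p-1) * of_nat (m choose (p-1))"
      using cong_c[OF m, of "p-1"] p3 unfolding p_def by simp
    also have "m choose (p-1) = 0" using m p3 unfolding p_def[symmetric] by (simp add: binomial_eq_0)
    finally show ?thesis unfolding of_int_a1 by simp
  qed
  show "coeff ([:1,-16:] * (P1 + smult 2 ([:0,1:] * pderiv P1))) n = coeff (P2 :: 'p mod_ring poly) n"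
    unfolding coeff_ell coeff_Q
  proof -
    consider "n = 0" | "0 < n" "n < p" | "n = p" | "n > p" by linarith
    thus "(1 + 2 * of_nat n) * coeff P1 n - 16 * (if n = 0 then 0 else (1 + 2 * of_nat (n - 1)) * coeff P1 (n - 1)) = coeff (P2 :: 'p mod_ring poly) n"
    proof cases
      case 1 thus ?thesis using p3 by (simp add: coeff_P1 coeff_P2 a1_def a2_def)
    next
      case 2
      have r: "(2*of_nat n + 1) * (of_int (a1 n) :: 'p mod_ring) - 16*(2*of_nat n - 1) * of_int (a1 (n-1)) = of_int (a2 n)"
        using arg_cong[OF a12[OF 2(1)], of "of_int :: int \<Rightarrow> 'p mod_ring"] by simp
      have "(of_nat (n-1) :: 'p mod_ring) = of_nat n - 1" using 2 by (simp add: of_nat_diff)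
      thus ?thesis using 2 r unfolding p_def by (simp add: coeff_P1 coeff_P2 algebra_simps less_imp_diff_less)
    next
      case 3 thus ?thesis using zero p3 unfolding p_def by (simp add: coeff_P1 coeff_P2)
    next
      case 4 thus ?thesis unfolding p_def by (simp add: coeff_P1 coeff_P2)
    qed
  qed
qed


lemma bz: "fst (bezout_coefficients a b) * a + snd (bezout_coefficients a b) * b = gcd a (b :: 'p::prime_card mod_ring poly)"
  by (rule bezout_coefficients_fst_snd)

lemma poly_P1: "poly (P1 :: 'p::prime_card mod_ring poly) x = (\<Sum>n<CARD('p). of_int (a1 n) * x^n)"
  unfolding P1_def by (simp add: poly_sum poly_monom)

lemma P1_0: "poly (P1 :: 'p::prime_card mod_ring poly) 0 = 1"
  by (simp add: poly_0_coeff_0 coeff_P1 a1_def)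

lemma nz_small: assumes "CARD('p::prime_card) \<ge> 3" "x dvd 16" "x > 0"
  shows "(of_nat x :: 'p mod_ring) \<noteq> 0"
proof
  assume "(of_nat x :: 'p mod_ring) = 0"
  hence "CARD('p) dvd x" by (rule of_nat_0_mod_ring_dvd)
  hence "CARD('p) dvd 2^4" using assms(2) by (simp add: dvd_trans)
  hence "CARD('p) dvd 2" using prime_dvd_power[OF prime_card] by blast
  thus False using assms(1) by (auto dest: dvd_imp_le)
qed

lemma P1_w: assumes p3: "CARD('p::prime_card) \<ge> 3"
  shows "poly (P1 :: 'p mod_ring poly) (inverse 16) \<noteq> 0"
proof -
  define p where "p = CARD('p)"
  define m where "m = (p - 1) div 2"
  have "prime p" unfolding p_def by (rule prime_card)
  hence "odd p" using p3 prime_odd_nat unfolding p_def by auto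
  hence m: "2*m+1 = CARD('p)" unfolding m_def p_def[symmetric] by presburger
  have n16: "(16 :: 'p mod_ring) \<noteq> 0" using nz_small[OF p3, of 16] by simp
  have tm: "(of_int (a1 n) :: 'p mod_ring) * (inverse 16)^n = of_nat ((m choose n)^2)" if "n < p" for n
  proof -
    have "(of_int (a1 n) :: 'p mod_ring) = ((-4)^n * of_nat (m choose n))^2"
      unfolding of_int_a1 using cong_c[OF m, of n] that unfolding p_def by simp
    also have "\<dots> = 16^n * of_nat ((m choose n)^2)"
      by (simp add: power_mult_distrib power2_eq_square power_mult_distrib[symmetric])
    finally show ?thesis using n16 by (simp add: power_inverse field_simps)
  qed
  have "poly (P1 :: 'p mod_ring poly) (inverse 16) = (\<Sum>n<p. of_nat ((m choose n)^2))"
    unfolding poly_P1 p_def[symmetric] using tm by simp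
  also have "\<dots> = of_nat (\<Sum>n<p. (m choose n)^2)" by simp
  also have "(\<Sum>n<p. (m choose n)^2) = (\<Sum>n\<le>m. (m choose n)^2)"
    by (rule sum.mono_neutral_right) (use m in \<open>auto simp: p_def binomial_eq_0\<close>)
  also have "\<dots> = (2*m) choose m" by (rule choose_square_sum)
  finally have eq: "poly (P1 :: 'p mod_ring poly) (inverse 16) = of_nat ((2*m) choose m)" .
  show ?thesis
  proof
    assume "poly (P1 :: 'p mod_ring poly) (inverse 16) = 0"
    hence "CARD('p) dvd ((2*m) choose m)" unfolding eq by (rule of_nat_0_mod_ring_dvd)
    hence "p dvd fact (2*m)"
      using binomial_fact_lemma[of m "2*m"] unfolding p_def
      by (metis dvd_mult le_add2 mult_2)
    hence "p \<le> 2*m" using \<open>prime p\<close> prime_dvd_fact_iff by blast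
    thus False using m unfolding p_def by simp
  qed
qed


definition Dop :: "'a::idom poly \<Rightarrow> 'a poly" where
  "Dop f = [:1,-16:] * ([:0,1:] * pderiv f)"

lemma gen1: "(l::'a::comm_ring_1) * (z * (a + b)) = l * (z * a) + l * (z * b)"
  by (simp add: algebra_simps)

lemma gen2: "(l::'a::comm_ring_1) * (z * (f * a + g * b)) = f * (l * (z * a)) + g * (l * (z * b))"
  by (simp add: algebra_simps)

lemma gen3: assumes h: "(l::'a::field poly) * (P + smult c X) = Q" shows "smult c (l * X) = Q - l * P"
proof -
  have "smult c (l * X) = l * smult c X" by (rule mult_smult_right[symmetric])
  also have "\<dots> = l * (P + smult c X) - l * P" by (simp only: distrib_left add_diff_cancel_left')
  finally show ?thesis unfolding h .
qed

lemma Dop_add: "Dop (f + g) = Dop f + Dop g"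
  unfolding Dop_def pderiv_add by (rule gen1)

lemma Dop_mult: "Dop (f * g) = f * Dop g + g * Dop f"
  unfolding Dop_def pderiv_mult by (rule gen2)

theorem mainTheorem16:
  assumes "CARD('p::prime_card) \<ge> 3"
  shows "coprime (P1 :: 'p mod_ring poly) (P2 :: 'p mod_ring poly)"
proof -
  define g where "g = gcd (P1 :: 'p mod_ring poly) P2"
  define s where "s = fst (bezout_coefficients (P1 :: 'p mod_ring poly) P2)"
  define t where "t = snd (bezout_coefficients (P1 :: 'p mod_ring poly) P2)"
  let ?l = "[:1,-16:] :: 'p mod_ring poly"
  have gst: "g = s * P1 + t * P2" unfolding g_def s_def t_def by (simp add: bz)
  have g1: "g dvd P1" and g2: "g dvd P2" unfolding g_def by auto
  have D1: "smult 2 (Dop P1) = P2 - ?l * P1"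
    using idB[OF assms] unfolding Dop_def by (rule gen3)
  have D2: "smult 2 (Dop P2) = ?l * (P2 - P1)"
  proof -
    have "smult 2 (Dop P2) = ?l * smult 2 ([:0,1:] * pderiv P2)"
      unfolding Dop_def by (rule mult_smult_right[symmetric])
    also have "\<dots> = ?l * (P2 - P1)" unfolding idA ..
    finally show ?thesis .
  qed
  have "smult 2 (Dop g) = s * smult 2 (Dop P1) + t * smult 2 (Dop P2) + smult 2 (P1 * Dop s + P2 * Dop t)"
    unfolding gst Dop_add Dop_mult by (simp only: smult_add_right mult_smult_right add_ac)
  also have "\<dots> = s * (P2 - ?l * P1) + t * (?l * (P2 - P1)) + smult 2 (P1 * Dop s + P2 * Dop t)"
    unfolding D1 D2 ..
  also have "g dvd \<dots>"
    using dvd_add[OF dvd_add[OF dvd_mult[OF dvd_diff[OF g2 dvd_mult[OF g1]]] dvd_mult[OF dvd_mult[OF dvd_diff[OF g2 g1]]]]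
        dvd_smult[OF dvd_add[OF dvd_mult2[OF g1] dvd_mult2[OF g2]]]] .
  finally have "g dvd smult 2 (Dop g)" .
  moreover have "(2 :: 'p mod_ring) \<noteq> 0" using nz_small[OF assms, of 2] by simp
  ultimately have gD: "g dvd Dop g" by (simp add: dvd_smult_iff)
  have cl: "coprime g ?l"
  proof -
    have "\<not> ?l dvd g"
    proof
      assume "?l dvd g"
      hence "?l dvd P1" using g1 by (rule dvd_trans)
      then obtain k where k: "P1 = ?l * k" by blast
      have e: "poly P1 (inverse 16) = poly ?l (inverse 16) * poly k (inverse 16)" unfolding k by (rule poly_mult)
      have "(16 :: 'p mod_ring) \<noteq> 0" using nz_small[OF assms, of 16] by simp
      hence "poly ?l (inverse 16) = 0" by simp
      thus False using P1_w[OF assms] e by simp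
    qed
    moreover have "(-16 :: 'p mod_ring) \<noteq> 0" using nz_small[OF assms, of 16] by simp
    ultimately show ?thesis using prime_elem_imp_coprime[OF prime_elem_linear_field_poly[of "-16::'p mod_ring" 1]]
      by (simp add: coprime_commute)
  qed
  let ?z = "[:0,1:] :: 'p mod_ring poly"
  have cz: "coprime g ?z"
  proof -
    have "\<not> ?z dvd g"
    proof
      assume "?z dvd g"
      hence "?z dvd P1" using g1 by (rule dvd_trans)
      hence "poly (P1 :: 'p mod_ring poly) 0 = 0" using poly_eq_0_iff_dvd[of "P1 :: 'p mod_ring poly" 0] by simp
      thus False using P1_0[where 'p='p] by simp
    qed
    thus ?thesis using prime_elem_imp_coprime[OF prime_elem_linear_field_poly[of "1::'p mod_ring" 0]]
      by (simp add: coprime_commute)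
  qed
  have gd: "g dvd pderiv g"
    using gD unfolding Dop_def coprime_dvd_mult_right_iff[OF cl] coprime_dvd_mult_right_iff[OF cz] .
  have P1nz: "P1 \<noteq> (0 :: 'p mod_ring poly)" using P1_0[where 'p='p] by auto
  hence gnz: "g \<noteq> 0" unfolding g_def by simp
  have degP1: "degree (P1 :: 'p mod_ring poly) \<le> CARD('p) - 1"
    by (rule degree_le) (auto simp: coeff_P1)
  have dg: "degree g < CARD('p)"
    using dvd_imp_degree_le[OF g1 P1nz] degP1 assms by linarith
  have "degree g = 0"
  proof (rule ccontr)
    assume d0: "degree g \<noteq> 0"
    define d where "d = degree g"
    have "coeff (pderiv g) (d - 1) = of_nat d * lead_coeff g"
      using d0 unfolding d_def by (simp add: coeff_pderiv)
    moreover have "(of_nat d :: 'p mod_ring) \<noteq> 0" using of_nat_nz d0 dg unfolding d_def by auto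
    ultimately have "pderiv g \<noteq> 0" using gnz by auto
    hence "degree g \<le> degree (pderiv g)" using gd by (rule dvd_imp_degree_le[rotated])
    moreover have "degree (pderiv g) \<le> d - 1"
      by (rule degree_le) (auto simp: coeff_pderiv d_def coeff_eq_0)
    ultimately show False using d0 unfolding d_def by linarith
  qed
  hence "is_unit g" using gnz by (simp add: is_unit_iff_degree)
  thus ?thesis unfolding g_def using is_unit_gcd by blast
qed

end
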